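(* Let $n\ge2$, $\tau\in[n-1]$, $\mu_{\mathrm{L}},\mu_{\mathrm{R}}\in\mathbb{R}$, $\eta=\tau/n$, and $\boldsymbol{\mu}\in\mathbb{R}^n$ with $\mu_i=\mu_{\mathrm{L}}\mathbb{1}\{i\le\tau\}+\mu_{\mathrm{R}}\mathbb{1}\{i>\tau\}$. Let $T'=\{t_0\in\mathbb{Z}^+:|t_0-\tau|\le\min(\tau,n-\tau)/2\}$. Then $$\min_{t_0\in T'}|\boldsymbol{v}_{t_0}^\top\boldsymbol{\mu}|\ge\frac{\sqrt3}{3}|\mu_{\mathrm{L}}-\mu_{\mathrm{R}}|\sqrt{n\eta(1-\eta)}.$$
   Context: For $t\in[n-1]$, $\boldsymbol{v}_t=\bigl(\sqrt{\tfrac{n-t}{tn}}\boldsymbol{1}_t^\top,\,-\sqrt{\tfrac{t}{(n-t)n}}\boldsymbol{1}_{n-t}^\top\bigr)^\top\in\mathbb{R}^n$, where $\boldsymbol{1}_k$ is the all-ones vector of length $k$. *)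

theory Defs
  imports Complex_Main
begin

definition cusum_vec :: "nat \<Rightarrow> nat \<Rightarrow> nat \<Rightarrow> real" where
  "cusum_vec n t i =
     (if i \<le> t then sqrt (real (n - t) / (real t * real n))
      else - sqrt (real t / (real (n - t) * real n)))"

end

theory Submission
  imports Defs
begin

lemma sqrt_rel_real:
  fixes a b c :: real
  assumes "a > 0" "b > 0" "c > 0"
  shows "b * sqrt (a / (b * c)) = a * sqrt (b / (a * c))"
proof -
  have "a / (b * c) = (a / b)^2 * (b / (a * c))"
    using assms by (simp add: field_simps power2_eq_square)
  hence "sqrt (a / (b * c)) = sqrt ((a / b)^2) * sqrt (b / (a * c))"
    by (simp only: real_sqrt_mult)
  also have "sqrt ((a / b)^2) = a / b" using assms by simp
  finally show ?thesis using assms by (simp add: field_simps)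
qed

lemma sqrt_rel:
  fixes n t :: nat
  assumes "1 \<le> t" "t < n"
  shows "real t * sqrt (real (n - t) / (real t * real n)) = real (n - t) * sqrt (real t / (real (n - t) * real n))"
  using sqrt_rel_real[of "real (n-t)" "real t" "real n"] assms by simp

lemma sum_split3:
  fixes f :: "nat \<Rightarrow> real"
  assumes "a \<le> b" "b \<le> n"
  shows "(\<Sum>i=1..n. f i) = (\<Sum>i\<in>{1..a}. f i) + (\<Sum>i\<in>{a<..b}. f i) + (\<Sum>i\<in>{b<..n}. f i)"
proof -
  have "{1..n} = {1..a} \<union> {a<..b} \<union> {b<..n}" using assms by auto
  moreover have "{1..a} \<inter> {a<..b} = {}" "({1..a} \<union> {a<..b}) \<inter> {b<..n} = {}" using assms by auto
  ultimately show ?thesis by (simp add: sum.union_disjoint)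
qed

lemma key_le:
  fixes n t \<tau> :: nat
  assumes "1 \<le> t" "t \<le> \<tau>" "\<tau> < n"
  shows "(\<Sum>i=1..n. cusum_vec n t i * (if i \<le> \<tau> then L else R))
       = sqrt (real t / (real (n - t) * real n)) * real (n - \<tau>) * (L - R)"
proof -
  let ?P = "sqrt (real (n - t) / (real t * real n))"
  let ?A = "sqrt (real t / (real (n - t) * real n))"
  have "(\<Sum>i=1..n. cusum_vec n t i * (if i \<le> \<tau> then L else R))
     = (\<Sum>i\<in>{1..t}. ?P * L) + (\<Sum>i\<in>{t<..\<tau>}. - ?A * L) + (\<Sum>i\<in>{\<tau><..n}. - ?A * R)"
    using assms by (subst sum_split3[of t \<tau>]) (auto simp: cusum_vec_def intro!: sum.cong arg_cong2[where f="(+)"])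
  also have "\<dots> = real t * ?P * L - real (\<tau> - t) * ?A * L - real (n - \<tau>) * ?A * R"
    by simp
  also have "\<dots> = real (n-t) * ?A * L - real (\<tau> - t) * ?A * L - real (n - \<tau>) * ?A * R"
  proof -
    have "real t * ?P * L = real (n-t) * ?A * L" using sqrt_rel[of t n] assms by (simp only:)
    thus ?thesis by linarith
  qed
  also have "\<dots> = ?A * real (n - \<tau>) * (L - R)"
    using assms by (simp add: of_nat_diff algebra_simps)
  finally show ?thesis .
qed

lemma key_ge:
  fixes n t \<tau> :: nat
  assumes "1 \<le> \<tau>" "\<tau> \<le> t" "t < n"
  shows "(\<Sum>i=1..n. cusum_vec n t i * (if i \<le> \<tau> then L else R))
       = sqrt (real (n - t) / (real t * real n)) * real \<tau> * (L - R)"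
proof -
  let ?P = "sqrt (real (n - t) / (real t * real n))"
  let ?A = "sqrt (real t / (real (n - t) * real n))"
  have "(\<Sum>i=1..n. cusum_vec n t i * (if i \<le> \<tau> then L else R))
     = (\<Sum>i\<in>{1..\<tau>}. ?P * L) + (\<Sum>i\<in>{\<tau><..t}. ?P * R) + (\<Sum>i\<in>{t<..n}. - ?A * R)"
    using assms by (subst sum_split3[of \<tau> t]) (auto simp: cusum_vec_def intro!: sum.cong arg_cong2[where f="(+)"])
  also have "\<dots> = real \<tau> * ?P * L + real (t - \<tau>) * ?P * R - real (n - t) * ?A * R"
    using assms by (simp add: of_nat_diff)
  also have "\<dots> = real \<tau> * ?P * L + real (t - \<tau>) * ?P * R - real t * ?P * R"
  proof -
    have "real (n-t) * ?A * R = real t * ?P * R" using sqrt_rel[of t n] assms by (simp only:)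
    thus ?thesis by linarith
  qed
  also have "\<dots> = ?P * real \<tau> * (L - R)"
    using assms by (simp add: of_nat_diff algebra_simps)
  finally show ?thesis .
qed


lemma ineq1:
  fixes N T t :: real
  assumes "0 < t" "t \<le> T" "T < N" "T \<le> 2 * t" "3 * T - N \<le> 2 * t"
  shows "T * (N - T) / N / 3 \<le> t * (N - T)^2 / ((N - t) * N)"
proof -
  have id: "3 * t * (N - T) - T * (N - t) = 3 * (N - T) / 2 * (2 * t - T) + T / 2 * (2 * t - 3 * T + N)"
    by (simp add: field_simps)
  have "0 \<le> 3 * (N - T) / 2 * (2 * t - T)" using assms by simp
  moreover have "0 \<le> T / 2 * (2 * t - 3 * T + N)" using assms by simp
  ultimately have k: "T * (N - t) \<le> 3 * t * (N - T)" using id by linarith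
  have "T * (N - t) * (N - T) \<le> 3 * t * (N - T) * (N - T)"
    using mult_right_mono[OF k, of "N - T"] assms by simp
  thus ?thesis using assms by (simp add: divide_simps power2_eq_square) (simp add: algebra_simps)
qed

lemma ineq2:
  fixes N T t :: real
  assumes "T \<le> t" "t < N" "0 < T" "2 * t \<le> 3 * T" "2 * t \<le> N + T"
  shows "T * (N - T) / N / 3 \<le> (N - t) * T^2 / (t * N)"
proof -
  have h: "(N - T) * (N - (N - T)) / N / 3 \<le> (N - t) * (N - (N - T))^2 / ((N - (N - t)) * N)"
    using assms by (intro ineq1) (simp_all add: algebra_simps)
  have e1: "N - (N - T) = T" "N - (N - t) = t" by simp_all
  show ?thesis using h unfolding e1 by (simp add: mult.commute)
qed

lemma sq_bound:
  fixes x y :: real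
  assumes "0 \<le> x" "0 \<le> y" "x / 3 \<le> y^2"
  shows "sqrt 3 / 3 * sqrt x \<le> y"
proof (rule power2_le_imp_le)
  have "(sqrt 3 / 3 * sqrt x)^2 = x / 3" using assms by (simp add: power_mult_distrib power_divide)
  thus "(sqrt 3 / 3 * sqrt x)^2 \<le> y^2" using assms by linarith
qed (use assms in auto)

theorem lemmaA1:
  fixes n \<tau> :: nat and \<mu>L \<mu>R :: real
  assumes "n \<ge> 2" and "1 \<le> \<tau>" and "\<tau> \<le> n - 1"
  defines "\<eta> \<equiv> real \<tau> / real n"
    and "\<mu> \<equiv> (\<lambda>i::nat. if i \<le> \<tau> then \<mu>L else \<mu>R)"
    and "T' \<equiv> {t0::nat. 1 \<le> t0 \<and> \<bar>real t0 - real \<tau>\<bar> \<le> real (min \<tau> (n - \<tau>)) / 2}"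
  shows "Min ((\<lambda>t0. \<bar>\<Sum>i=1..n. cusum_vec n t0 i * \<mu> i\<bar>) ` T')
           \<ge> sqrt 3 / 3 * \<bar>\<mu>L - \<mu>R\<bar> * sqrt (real n * \<eta> * (1 - \<eta>))"
proof -
  have tn: "\<tau> < n" using assms(1,3) by linarith
  have x: "real n * \<eta> * (1 - \<eta>) = real \<tau> * (real n - real \<tau>) / real n"
    using tn unfolding \<eta>_def by (simp add: field_simps)
  have x0: "0 \<le> real \<tau> * (real n - real \<tau>) / real n" using tn by simp
  have fin: "finite T'"
  proof (rule finite_subset)
    show "T' \<subseteq> {..n}"
    proof
      fix t assume "t \<in> T'"
      hence "\<bar>real t - real \<tau>\<bar> \<le> real (n - \<tau>) / 2" unfolding T'_def by auto
      hence "real t - real \<tau> \<le> real (n - \<tau>) / 2" by linarith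
      hence "real t \<le> real n" using tn by (simp add: of_nat_diff)
      thus "t \<in> {..n}" by simp
    qed
  qed simp
  have ne: "\<tau> \<in> T'" using assms(2) unfolding T'_def by simp
  have bnd: "sqrt 3 / 3 * \<bar>\<mu>L - \<mu>R\<bar> * sqrt (real n * \<eta> * (1 - \<eta>))
      \<le> \<bar>\<Sum>i=1..n. cusum_vec n t i * \<mu> i\<bar>" if tT: "t \<in> T'" for t
  proof -
    from tT have t1: "1 \<le> t" and ab: "\<bar>real t - real \<tau>\<bar> \<le> real (min \<tau> (n - \<tau>)) / 2"
      unfolding T'_def by auto
    have m1: "real (min \<tau> (n - \<tau>)) \<le> real \<tau>" by simp
    have m2: "real (min \<tau> (n - \<tau>)) \<le> real n - real \<tau>" using tn by (simp add: of_nat_diff)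
    have tlt: "t < n"
    proof -
      have "real t < real n" using ab m2 tn by linarith
      thus ?thesis by simp
    qed
    show ?thesis
    proof (cases "t \<le> \<tau>")
      case True
      let ?A = "sqrt (real t / (real (n - t) * real n))"
      have s: "(\<Sum>i=1..n. cusum_vec n t i * \<mu> i) = ?A * real (n - \<tau>) * (\<mu>L - \<mu>R)"
        unfolding \<mu>_def using key_le[OF t1 True tn] .
      have y0: "0 \<le> ?A * real (n - \<tau>)" by simp
      have "(?A * real (n - \<tau>))^2 = real t * (real n - real \<tau>)^2 / ((real n - real t) * real n)"
        using tlt tn by (simp add: power_mult_distrib of_nat_diff)
      moreover have "real \<tau> * (real n - real \<tau>) / real n / 3 \<le> real t * (real n - real \<tau>)^2 / ((real n - real t) * real n)"
        apply (rule ineq1) using t1 True tn ab m1 m2 by auto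
      ultimately have "sqrt 3 / 3 * sqrt (real n * \<eta> * (1 - \<eta>)) \<le> ?A * real (n - \<tau>)"
        unfolding x using sq_bound[OF x0 y0] by simp
      hence "sqrt 3 / 3 * sqrt (real n * \<eta> * (1 - \<eta>)) * \<bar>\<mu>L - \<mu>R\<bar> \<le> ?A * real (n - \<tau>) * \<bar>\<mu>L - \<mu>R\<bar>"
        by (rule mult_right_mono) simp
      thus ?thesis unfolding s by (simp add: abs_mult mult_ac)
    next
      case False
      let ?P = "sqrt (real (n - t) / (real t * real n))"
      have s: "(\<Sum>i=1..n. cusum_vec n t i * \<mu> i) = ?P * real \<tau> * (\<mu>L - \<mu>R)"
        unfolding \<mu>_def using key_ge[OF assms(2) _ tlt] False by simp
      have y0: "0 \<le> ?P * real \<tau>" by simp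
      have "(?P * real \<tau>)^2 = (real n - real t) * (real \<tau>)^2 / (real t * real n)"
        using tlt tn by (simp add: power_mult_distrib of_nat_diff)
      moreover have "real \<tau> * (real n - real \<tau>) / real n / 3 \<le> (real n - real t) * (real \<tau>)^2 / (real t * real n)"
        apply (rule ineq2) using t1 False tn ab m1 m2 assms(2) tlt by auto
      ultimately have "sqrt 3 / 3 * sqrt (real n * \<eta> * (1 - \<eta>)) \<le> ?P * real \<tau>"
        unfolding x using sq_bound[OF x0 y0] by simp
      hence "sqrt 3 / 3 * sqrt (real n * \<eta> * (1 - \<eta>)) * \<bar>\<mu>L - \<mu>R\<bar> \<le> ?P * real \<tau> * \<bar>\<mu>L - \<mu>R\<bar>"
        by (rule mult_right_mono) simp
      thus ?thesis unfolding s by (simp add: abs_mult mult_ac)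
    qed
  qed
  show ?thesis using fin ne bnd by (subst Min_ge_iff) auto
qed

end
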